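(* Let $\Gamma=(\gamma_n)_{n\ge1}$ be distinct complex numbers with $\inf_n|\gamma_{n+1}|/|\gamma_n|>1$, and let $v=(v_n)$ be positive numbers with $\sum_nv_n<\infty$. If $\mu$ is a nonnegative measure on $\mathbb{C}$ with $\mu(\Gamma)=0$, then $H_{(\Gamma,v)}$ is bounded from $\ell^2_v$ to $L^2(\mathbb{C},\mu)$ if and only if \[ \sup_{n\ge1}\int_{\mathbb{C}}\frac{v_n\,d\mu(z)}{|z-\gamma_n|^2}<\infty. \]
   Context: $\ell^2_v=\{(a_n):\sum|a_n|^2v_n<\infty\}$; for $z\in\mathbb{C}\setminus\Gamma$, $H_{(\Gamma,v)}a(z)=\sum_na_nv_n/(z-\gamma_n)$. *)

theory Defs
  imports "HOL-Analysis.Analysis"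
begin

definition weighted_l2 :: "(nat \<Rightarrow> real) \<Rightarrow> (nat \<Rightarrow> complex) set" where
  "weighted_l2 v = {a. summable (\<lambda>n. (cmod (a n))\<^sup>2 * v n)}"

definition H_op :: "(nat \<Rightarrow> complex) \<Rightarrow> (nat \<Rightarrow> real) \<Rightarrow> (nat \<Rightarrow> complex) \<Rightarrow> complex \<Rightarrow> complex" where
  "H_op \<gamma> v a z = (\<Sum>n. a n * complex_of_real (v n) / (z - \<gamma> n))"

definition H_bounded :: "(nat \<Rightarrow> complex) \<Rightarrow> (nat \<Rightarrow> real) \<Rightarrow> complex measure \<Rightarrow> bool" where
  "H_bounded \<gamma> v \<mu> \<longleftrightarrow> (\<exists>C::real. \<forall>a\<in>weighted_l2 v.
      H_op \<gamma> v a \<in> borel_measurable \<mu> \<and>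
      (\<integral>\<^sup>+ z. ennreal ((cmod (H_op \<gamma> v a z))\<^sup>2) \<partial>\<mu>)
        \<le> ennreal (C * (\<Sum>n. (cmod (a n))\<^sup>2 * v n)))"

end

theory Submission
  imports Defs
begin


lemma growth:
  fixes r :: "nat \<Rightarrow> real"
  assumes q: "q > 1" and st: "\<And>n. r (Suc n) \<ge> q * r n" and r0: "r 0 > 0"
  shows "r n > 0" "r (m + k) \<ge> q ^ k * r m"
proof -
  show pos: "r n > 0" for n
  proof (induction n)
    case 0 then show ?case using r0 .
  next
    case (Suc n)
    have "q * r n > 0" using q Suc by simp
    then show ?case using st[of n] by linarith
  qed
  show "r (m + k) \<ge> q ^ k * r m"
  proof (induction k)
    case 0 then show ?case by simp
  next
    case (Suc k)
    have "q ^ Suc k * r m = q * (q ^ k * r m)" by simp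
    also have "\<dots> \<le> q * r (m + k)" using Suc q by simp
    also have "\<dots> \<le> r (m + Suc k)" using st[of "m+k"] by simp
    finally show ?case .
  qed
qed

lemma near_card:
  fixes r :: "nat \<Rightarrow> real"
  assumes q: "q > 1" and st: "\<And>n. r (Suc n) \<ge> q * r n" and r0: "r 0 > 0"
    and L: "q ^ L > 3" and al: "\<alpha> > 0"
  shows "finite {n. \<alpha> \<le> r n \<and> r n \<le> 3 * \<alpha>} \<and> card {n. \<alpha> \<le> r n \<and> r n \<le> 3 * \<alpha>} \<le> L"
proof (cases "{n. \<alpha> \<le> r n \<and> r n \<le> 3 * \<alpha>} = {}")
  case True show ?thesis unfolding True by simp
next
  case False
  define A where "A = {n. \<alpha> \<le> r n \<and> r n \<le> 3 * \<alpha>}"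
  define m where "m = (LEAST n. n \<in> A)"
  have "A \<noteq> {}" using False A_def by simp
  then obtain x where "x \<in> A" by blast
  then have mA: "m \<in> A" unfolding m_def by (rule LeastI)
  have sub: "A \<subseteq> {m..<m+L}"
  proof
    fix n assume nA: "n \<in> A"
    have "m \<le> n" using nA unfolding m_def by (rule Least_le)
    moreover have "n < m + L"
    proof (rule ccontr)
      assume "\<not> n < m + L"
      define k where "k = n - m"
      have k: "n = m + k" "k \<ge> L" using \<open>m \<le> n\<close> \<open>\<not> n < m + L\<close> unfolding k_def by auto
      have "q ^ L \<le> q ^ k" using q k(2) by (simp add: power_increasing)
      have rm: "r m \<ge> \<alpha>" using mA A_def by auto
      have "r n \<ge> q ^ k * r m" using growth(2)[OF q st r0, where m=m and k=k] k by simp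
      moreover have "q ^ k * r m > 3 * r m"
      proof -
        have "q ^ L * r m > 3 * r m" using L rm al by (intro mult_strict_right_mono) auto
        moreover have "q ^ L * r m \<le> q ^ k * r m" using \<open>q ^ L \<le> q ^ k\<close> rm al by (intro mult_right_mono) auto
        ultimately show ?thesis by linarith
      qed
      ultimately show False using nA rm A_def by auto
    qed
    ultimately show "n \<in> {m..<m+L}" by simp
  qed
  then have "finite A" using finite_subset by blast
  moreover have "card A \<le> L" using card_mono[OF _ sub] by simp
  ultimately show ?thesis unfolding A_def by simp
qed



lemma pointwise:
  fixes \<gamma> :: "nat \<Rightarrow> complex" and v :: "nat \<Rightarrow> real" and a :: "nat \<Rightarrow> complex"
  assumes q: "q > 1" and st: "\<And>n. cmod (\<gamma> (Suc n)) \<ge> q * cmod (\<gamma> n)" and r0: "cmod (\<gamma> 0) > 0"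
    and L: "q ^ L > 3" and vpos: "\<And>n. v n > 0" and sv: "summable v" and z: "z \<notin> range \<gamma>"
  shows "(cmod (\<Sum>n<N. a n * complex_of_real (v n) / (z - \<gamma> n)))\<^sup>2 \<le>
     (\<Sum>n<N. (cmod (a n))\<^sup>2 * v n * (v n / (cmod (z - \<gamma> n))\<^sup>2 + 16 / (cmod (z - \<gamma> 0))\<^sup>2)) * (suminf v + L)"
proof -
  define r where "r n = cmod (\<gamma> n)" for n
  define d where "d = cmod (z - \<gamma> 0)"
  define D where "D = 16 / d\<^sup>2"
  define u where "u n = v n / (cmod (z - \<gamma> n))\<^sup>2" for n
  define P where "P n = (cmod (a n))\<^sup>2 * v n * (u n + D)" for n
  define Q where "Q n = u n / (u n + D)" for n
  define \<alpha> where "\<alpha> = max (r 0) (cmod z / 2)"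
  define Near where "Near = {n. \<alpha> \<le> r n \<and> r n \<le> 3 * \<alpha>}"
  have stR: "\<And>n. r (Suc n) \<ge> q * r n" and r0': "r 0 > 0" using st r0 unfolding r_def by auto
  have zn: "cmod (z - \<gamma> n) > 0" for n proof -
    have "z \<noteq> \<gamma> n" using z by auto
    then show ?thesis by simp
  qed
  have dpos: "d > 0" using zn unfolding d_def by simp
  have Dpos: "D > 0" using dpos unfolding D_def by simp
  have u0: "u n \<ge> 0" for n using vpos[of n] unfolding u_def by simp
  have rge: "r n \<ge> r 0" for n
  proof -
    have "r (0 + n) \<ge> q ^ n * r 0" by (rule growth(2)[OF q stR r0'])
    moreover have "q ^ n \<ge> 1" using q by simp
    moreover have "1 * r 0 \<le> q ^ n * r 0" using \<open>q ^ n \<ge> 1\<close> r0' by (intro mult_right_mono) auto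
    ultimately show ?thesis by simp
  qed
  have near: "n \<in> Near" if "cmod (z - \<gamma> n) < d / 4" for n
  proof -
    have t1: "r n \<ge> cmod z - cmod (z - \<gamma> n)" using norm_triangle_ineq2[of z "\<gamma> n"] unfolding r_def by linarith
    have t2: "r n \<le> cmod z + cmod (z - \<gamma> n)" using norm_triangle_ineq2[of "\<gamma> n" z] norm_minus_commute[of "\<gamma> n" z] unfolding r_def by linarith
    have t3: "d \<le> cmod z + r 0" unfolding d_def r_def by (rule norm_triangle_ineq4)
    have "max (r 0) (cmod z / 2) \<le> r n \<and> r n \<le> 3 * max (r 0) (cmod z / 2)"
    proof (cases "cmod z \<ge> r 0")
      case True
      then have "max (r 0) (cmod z / 2) \<le> cmod z" by simp
      moreover have "max (r 0) (cmod z / 2) \<ge> cmod z / 2" by simp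
      ultimately show ?thesis using True t1 t2 t3 that rge[of n] r0' by linarith
    next
      case False
      then have "cmod z / 2 \<le> r 0" using norm_ge_zero[of z] by linarith
      then have "max (r 0) (cmod z / 2) = r 0" by (simp add: max_def)
      then show ?thesis using False t1 t2 t3 that rge[of n] r0' by linarith
    qed
    then show ?thesis unfolding Near_def \<alpha>_def by simp
  qed
  have Qle: "Q n \<le> v n + (if n \<in> Near then 1 else 0)" for n
  proof (cases "n \<in> Near")
    case True
    have "Q n \<le> 1" unfolding Q_def using u0[of n] Dpos by simp
    then show ?thesis using True vpos[of n] by simp
  next
    case False
    then have far: "cmod (z - \<gamma> n) \<ge> d / 4" using near by force
    have "(cmod (z - \<gamma> n))\<^sup>2 \<ge> (d/4)\<^sup>2" using far dpos by (intro power_mono) auto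
    then have "u n \<le> v n / (d/4)\<^sup>2" unfolding u_def using vpos[of n] dpos zn[of n]
      by (intro divide_left_mono) auto
    also have "\<dots> = v n * D" unfolding D_def by (simp add: power_divide)
    finally have uD: "u n \<le> v n * D" .
    have "Q n \<le> u n / D" unfolding Q_def using u0[of n] Dpos by (intro divide_left_mono) auto
    also have "\<dots> \<le> v n" using uD Dpos by (simp add: divide_le_eq)
    finally show ?thesis using False by simp
  qed
  have "\<alpha> > 0" unfolding \<alpha>_def using r0' by simp
  then have nc: "finite Near \<and> card Near \<le> L" unfolding Near_def
    by (rule near_card[OF q stR r0' L])
  have sumQ: "(\<Sum>n<N. Q n) \<le> suminf v + L"
  proof -
    have "(\<Sum>n<N. Q n) \<le> (\<Sum>n<N. v n + (if n \<in> Near then 1 else 0))" by (intro sum_mono Qle)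
    also have "\<dots> = (\<Sum>n<N. v n) + (\<Sum>n<N. (if n \<in> Near then 1 else 0))" by (rule sum.distrib)
    also have "(\<Sum>n<N. (if n \<in> Near then 1 else 0::real)) = real (card ({..<N} \<inter> Near))"
      by (simp add: sum.If_cases)
    also have "card ({..<N} \<inter> Near) \<le> card Near" using nc by (intro card_mono) auto
    also have "(\<Sum>n<N. v n) \<le> suminf v" using sv vpos by (intro sum_le_suminf) (auto simp: less_imp_le)
    finally show ?thesis using nc by linarith
  qed
  have xeq: "cmod (a n * complex_of_real (v n) / (z - \<gamma> n)) = sqrt (P n) * sqrt (Q n)" for n
  proof -
    have "u n + D > 0" using u0[of n] Dpos by linarith
    then have "P n * Q n = (cmod (a n))\<^sup>2 * v n * u n" unfolding P_def Q_def by simp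
    also have "\<dots> = (cmod (a n * complex_of_real (v n) / (z - \<gamma> n)))\<^sup>2"
      unfolding u_def using vpos[of n] zn[of n] by (simp add: norm_mult norm_divide power2_eq_square)
    finally have e: "P n * Q n = (cmod (a n * complex_of_real (v n) / (z - \<gamma> n)))\<^sup>2" .
    have "sqrt (P n) * sqrt (Q n) = sqrt (P n * Q n)" by (simp add: real_sqrt_mult)
    also have "\<dots> = cmod (a n * complex_of_real (v n) / (z - \<gamma> n))" unfolding e by simp
    finally show ?thesis by simp
  qed
  have P0: "P n \<ge> 0" for n unfolding P_def using u0[of n] Dpos vpos[of n] by simp
  have Q0: "Q n \<ge> 0" for n unfolding Q_def using u0[of n] Dpos by simp
  have "cmod (\<Sum>n<N. a n * complex_of_real (v n) / (z - \<gamma> n)) \<le> (\<Sum>n<N. sqrt (P n) * sqrt (Q n))"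
    using norm_sum[of "\<lambda>n. a n * complex_of_real (v n) / (z - \<gamma> n)" "{..<N}"] xeq by simp
  then have "(cmod (\<Sum>n<N. a n * complex_of_real (v n) / (z - \<gamma> n)))\<^sup>2 \<le> (\<Sum>n<N. sqrt (P n) * sqrt (Q n))\<^sup>2"
    by (intro power_mono) auto
  also have "\<dots> \<le> (\<Sum>n<N. (sqrt (P n))\<^sup>2) * (\<Sum>n<N. (sqrt (Q n))\<^sup>2)" by (rule Cauchy_Schwarz_ineq_sum)
  also have "\<dots> = (\<Sum>n<N. P n) * (\<Sum>n<N. Q n)" using P0 Q0 by simp
  also have "\<dots> \<le> (\<Sum>n<N. P n) * (suminf v + L)" using sumQ P0 by (intro mult_left_mono sum_nonneg) auto
  finally show ?thesis unfolding P_def u_def D_def d_def by simp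
qed



lemma summ:
  fixes \<gamma> :: "nat \<Rightarrow> complex" and v :: "nat \<Rightarrow> real" and a :: "nat \<Rightarrow> complex"
  assumes q: "q > 1" and st: "\<And>n. cmod (\<gamma> (Suc n)) \<ge> q * cmod (\<gamma> n)" and r0: "cmod (\<gamma> 0) > 0"
    and vpos: "\<And>n. v n > 0" and sv: "summable v" and a: "a \<in> weighted_l2 v"
  shows "summable (\<lambda>n. a n * complex_of_real (v n) / (z - \<gamma> n))"
proof -
  define r where "r n = cmod (\<gamma> n)" for n
  have stR: "\<And>n. r (Suc n) \<ge> q * r n" and r0': "r 0 > 0" using st r0 unfolding r_def by auto
  obtain K where K: "(2 * cmod z + 2) / r 0 < q ^ K" using real_arch_pow[OF q] by blast
  have big: "r n > 2 * cmod z + 2" if "n \<ge> K" for n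
  proof -
    have "q ^ K \<le> q ^ n" using q that by (simp add: power_increasing)
    have "2 * cmod z + 2 < q ^ K * r 0" using K r0' by (simp add: pos_divide_less_eq)
    also have "\<dots> \<le> q ^ n * r 0" using \<open>q ^ K \<le> q ^ n\<close> r0' by (intro mult_right_mono) auto
    also have "\<dots> \<le> r (0 + n)" by (rule growth(2)[OF q stR r0'])
    finally show ?thesis by simp
  qed
  have sg: "summable (\<lambda>n. (cmod (a n))\<^sup>2 * v n + v n)"
    using a sv unfolding weighted_l2_def by (intro summable_add) auto
  show ?thesis
  proof (rule summable_comparison_test'[OF sg])
    fix n assume "n \<ge> K"
    then have rn: "r n > 2 * cmod z + 2" by (rule big)
    have "cmod (z - \<gamma> n) \<ge> r n - cmod z" using norm_triangle_ineq2[of "\<gamma> n" z] norm_minus_commute[of "\<gamma> n" z] unfolding r_def by linarith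
    then have c1: "cmod (z - \<gamma> n) \<ge> 1" using rn norm_ge_zero[of z] by linarith
    have "norm (a n * complex_of_real (v n) / (z - \<gamma> n)) = cmod (a n) * v n / cmod (z - \<gamma> n)"
      using vpos[of n] by (simp add: norm_mult norm_divide)
    also have "\<dots> \<le> cmod (a n) * v n"
    proof -
      have "cmod (a n) * v n * 1 \<le> cmod (a n) * v n * cmod (z - \<gamma> n)"
        using c1 vpos[of n] by (intro mult_left_mono) auto
      then show ?thesis using c1 vpos[of n] by (simp add: divide_le_eq)
    qed
    also have "\<dots> \<le> (cmod (a n))\<^sup>2 * v n + v n"
    proof -
      have h: "0 \<le> (cmod (a n) - 1)\<^sup>2" by simp
      have "cmod (a n) \<le> (cmod (a n))\<^sup>2 + 1" 
      proof -
        have "2 * cmod (a n) \<le> (cmod (a n))\<^sup>2 + 1" using h unfolding power2_diff by simp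
        then show ?thesis using norm_ge_zero[of "a n"] by linarith
      qed
      then have "cmod (a n) * v n \<le> ((cmod (a n))\<^sup>2 + 1) * v n" using vpos[of n] by (intro mult_right_mono) auto
      then show ?thesis by (simp add: algebra_simps)
    qed
    finally show "norm (a n * complex_of_real (v n) / (z - \<gamma> n)) \<le> (cmod (a n))\<^sup>2 * v n + v n" .
  qed
qed



theorem corollary2:
  fixes \<gamma> :: "nat \<Rightarrow> complex" and v :: "nat \<Rightarrow> real" and \<mu> :: "complex measure"
  assumes "inj \<gamma>"
    and "(INF n. cmod (\<gamma> (Suc n)) / cmod (\<gamma> n)) > 1"
    and "\<And>n. v n > 0"
    and "summable v"
    and "sets \<mu> = sets borel"
    and "emeasure \<mu> (range \<gamma>) = 0"
  shows "H_bounded \<gamma> v \<mu> \<longleftrightarrow>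
    (SUP n. \<integral>\<^sup>+ z. ennreal (v n / (cmod (z - \<gamma> n))\<^sup>2) \<partial>\<mu>) < \<infinity>"
proof -
  note vpos = assms(3)
  have mu: "f \<in> borel_measurable \<mu>" if "f \<in> borel_measurable borel" for f :: "complex \<Rightarrow> 'b::topological_space"
    using that measurable_cong_sets[OF assms(5) refl] by blast
  have umeas: "(\<lambda>z. ennreal (v n / (cmod (z - \<gamma> n))\<^sup>2)) \<in> borel_measurable \<mu>" for n
    by (intro mu) measurable
  show ?thesis
  proof
    assume "H_bounded \<gamma> v \<mu>"
    then obtain C where hC: "\<And>a. a \<in> weighted_l2 v \<Longrightarrow>
      (\<integral>\<^sup>+ z. ennreal ((cmod (H_op \<gamma> v a z))\<^sup>2) \<partial>\<mu>) \<le> ennreal (C * (\<Sum>n. (cmod (a n))\<^sup>2 * v n))"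
      unfolding H_bounded_def by blast
    have bnd: "(\<integral>\<^sup>+ z. ennreal (v n / (cmod (z - \<gamma> n))\<^sup>2) \<partial>\<mu>) \<le> ennreal (max C 0)" for n
    proof -
      define e where "e k = (if k = n then 1 else 0 :: complex)" for k
      have e1: "(\<lambda>k. (cmod (e k))\<^sup>2 * v k) = (\<lambda>k. if k = n then v k else 0)"
        unfolding e_def by auto
      have "(\<lambda>k. (cmod (e k))\<^sup>2 * v k) sums v n" unfolding e1 by (rule sums_single)
      then have eW: "e \<in> weighted_l2 v" and eN: "(\<Sum>k. (cmod (e k))\<^sup>2 * v k) = v n"
        unfolding weighted_l2_def by (auto simp: sums_iff)
      have e2: "(\<lambda>k. e k * complex_of_real (v k) / (z - \<gamma> k)) = (\<lambda>k. if k = n then complex_of_real (v k) / (z - \<gamma> k) else 0)" for z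
        unfolding e_def by auto
      have He: "H_op \<gamma> v e z = complex_of_real (v n) / (z - \<gamma> n)" for z
        unfolding H_op_def e2 by (rule sums_unique[symmetric], rule sums_single)
      have "(\<integral>\<^sup>+ z. ennreal ((cmod (complex_of_real (v n) / (z - \<gamma> n)))\<^sup>2) \<partial>\<mu>) \<le> ennreal (C * v n)"
        using hC[OF eW] unfolding He eN .
      have pw: "ennreal (v n / (cmod (z - \<gamma> n))\<^sup>2) = ennreal (1 / v n) * ennreal ((cmod (complex_of_real (v n) / (z - \<gamma> n)))\<^sup>2)" for z
      proof -
        have eq: "v n / (cmod (z - \<gamma> n))\<^sup>2 = (1 / v n) * (cmod (complex_of_real (v n) / (z - \<gamma> n)))\<^sup>2"
          using vpos[of n] by (simp add: norm_divide power_divide power2_eq_square)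
        have "0 \<le> 1 / v n" using vpos[of n] by simp
        then show ?thesis unfolding eq by (rule ennreal_mult')
      qed
      have m2: "(\<lambda>z. ennreal ((cmod (complex_of_real (v n) / (z - \<gamma> n)))\<^sup>2)) \<in> borel_measurable \<mu>"
        by (intro mu) measurable
      have "(\<integral>\<^sup>+ z. ennreal (v n / (cmod (z - \<gamma> n))\<^sup>2) \<partial>\<mu>) =
          ennreal (1 / v n) * (\<integral>\<^sup>+ z. ennreal ((cmod (complex_of_real (v n) / (z - \<gamma> n)))\<^sup>2) \<partial>\<mu>)"
        unfolding pw by (rule nn_integral_cmult[OF m2])
      also have "\<dots> \<le> ennreal (1 / v n) * ennreal (C * v n)"
        using \<open>(\<integral>\<^sup>+ z. _ \<partial>\<mu>) \<le> ennreal (C * v n)\<close> by (rule mult_left_mono) simp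
      also have "\<dots> \<le> ennreal (1 / v n) * ennreal (max C 0 * v n)"
        using vpos[of n] by (intro mult_left_mono ennreal_leI mult_right_mono) auto
      also have "\<dots> = ennreal (max C 0)"
        using vpos[of n] by (simp add: ennreal_mult[symmetric])
      finally show ?thesis .
    qed
    have "(SUP n. \<integral>\<^sup>+ z. ennreal (v n / (cmod (z - \<gamma> n))\<^sup>2) \<partial>\<mu>) \<le> ennreal (max C 0)"
      by (intro SUP_least bnd)
    then show "(SUP n. \<integral>\<^sup>+ z. ennreal (v n / (cmod (z - \<gamma> n))\<^sup>2) \<partial>\<mu>) < \<infinity>"
      by (rule le_less_trans) simp
  next
    assume fin: "(SUP n. \<integral>\<^sup>+ z. ennreal (v n / (cmod (z - \<gamma> n))\<^sup>2) \<partial>\<mu>) < \<infinity>"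
    obtain M where M0: "M \<ge> 0" and Meq: "(SUP n. \<integral>\<^sup>+ z. ennreal (v n / (cmod (z - \<gamma> n))\<^sup>2) \<partial>\<mu>) = ennreal M"
      using fin[unfolded infinity_ennreal_def less_top_ennreal] by blast
    have intM: "(\<integral>\<^sup>+ z. ennreal (v n / (cmod (z - \<gamma> n))\<^sup>2) \<partial>\<mu>) \<le> ennreal M" for n
      unfolding Meq[symmetric] by (rule SUP_upper) simp
    define q where "q = (INF n. cmod (\<gamma> (Suc n)) / cmod (\<gamma> n))"
    have q: "q > 1" using assms(2) q_def by simp
    have bb: "bdd_below (range (\<lambda>n. cmod (\<gamma> (Suc n)) / cmod (\<gamma> n)))"
      by (rule bdd_belowI[where m=0]) auto
    have rat: "q \<le> cmod (\<gamma> (Suc n)) / cmod (\<gamma> n)" for n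
      unfolding q_def by (rule cINF_lower[OF bb]) simp
    have rpos: "cmod (\<gamma> n) > 0" for n
    proof (rule ccontr)
      assume "\<not> cmod (\<gamma> n) > 0"
      then have "cmod (\<gamma> n) = 0" by simp
      then show False using rat[of n] q by simp
    qed
    have st: "cmod (\<gamma> (Suc n)) \<ge> q * cmod (\<gamma> n)" for n
      using rat[of n] rpos[of n] by (simp add: pos_le_divide_eq)
    obtain L where L: "3 < q ^ L" using real_arch_pow[OF q] by blast
    define K where "K = suminf v + real L"
    define B where "B = M + 16 * M / v 0"
    have K0: "K \<ge> 0" unfolding K_def using suminf_nonneg[OF assms(4)] vpos by (simp add: less_imp_le)
    have B0: "B \<ge> 0" unfolding B_def using M0 vpos[of 0] by simp
    show "H_bounded \<gamma> v \<mu>"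
      unfolding H_bounded_def
    proof (intro exI[of _ "K * B"] ballI conjI)
      fix a assume a: "a \<in> weighted_l2 v"
      define x where "x n z = a n * complex_of_real (v n) / (z - \<gamma> n)" for n z
      have sx: "summable (\<lambda>n. x n z)" for z
        unfolding x_def by (rule summ[OF q st rpos[of 0] vpos assms(4) a])
      have lim: "(\<lambda>N. \<Sum>n<N. x n z) \<longlonglongrightarrow> H_op \<gamma> v a z" for z
        unfolding H_op_def x_def[symmetric] by (rule summable_LIMSEQ[OF sx])
      show "H_op \<gamma> v a \<in> borel_measurable \<mu>"
      proof (rule borel_measurable_LIMSEQ_metric[OF _ lim])
        fix N show "(\<lambda>z. \<Sum>n<N. x n z) \<in> borel_measurable \<mu>"
          unfolding x_def by (intro mu) measurable
      qed
      define c where "c n = (cmod (a n))\<^sup>2 * v n" for n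
      define P where "P n z = (cmod (a n))\<^sup>2 * v n * (v n / (cmod (z - \<gamma> n))\<^sup>2 + 16 / (cmod (z - \<gamma> 0))\<^sup>2)" for n z
      have c0: "c n \<ge> 0" for n unfolding c_def using vpos[of n] by simp
      have P0: "P n z \<ge> 0" for n z unfolding P_def using vpos[of n] by simp
      have sc: "summable c" using a unfolding weighted_l2_def c_def by simp
      have rg: "range \<gamma> \<in> sets \<mu>" unfolding assms(5)
        by (rule sets.countable) auto
      have AE: "AE z in \<mu>. z \<notin> range \<gamma>"
        by (rule AE_I'[of "range \<gamma>"]) (auto simp: null_sets_def rg assms(6))
      have pw: "ennreal ((cmod (H_op \<gamma> v a z))\<^sup>2) \<le> ennreal K * (\<Sum>n. ennreal (P n z))"
        if z: "z \<notin> range \<gamma>" for z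
      proof (rule LIMSEQ_le_const2)
        show "(\<lambda>N. ennreal ((cmod (\<Sum>n<N. x n z))\<^sup>2)) \<longlonglongrightarrow> ennreal ((cmod (H_op \<gamma> v a z))\<^sup>2)"
          by (intro tendsto_ennrealI tendsto_power tendsto_norm lim)
        show "\<exists>N. \<forall>n\<ge>N. ennreal ((cmod (\<Sum>n<n. x n z))\<^sup>2) \<le> ennreal K * (\<Sum>n. ennreal (P n z))"
        proof (intro exI allI impI)
          fix N :: nat
          have "(cmod (\<Sum>n<N. x n z))\<^sup>2 \<le> (\<Sum>n<N. P n z) * K"
            unfolding x_def P_def K_def by (rule pointwise[OF q st rpos[of 0] L vpos assms(4) z])
          then have "ennreal ((cmod (\<Sum>n<N. x n z))\<^sup>2) \<le> ennreal ((\<Sum>n<N. P n z) * K)"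
            by (rule ennreal_leI)
          also have "\<dots> = ennreal K * (\<Sum>n<N. ennreal (P n z))"
            using P0 K0 by (simp add: ennreal_mult mult.commute sum_nonneg)
          also have "\<dots> \<le> ennreal K * (\<Sum>n. ennreal (P n z))"
            by (intro mult_left_mono sum_le_suminf) auto
          finally show "ennreal ((cmod (\<Sum>n<N. x n z))\<^sup>2) \<le> ennreal K * (\<Sum>n. ennreal (P n z))" .
        qed
      qed
      have Pm: "(\<lambda>z. ennreal (P n z)) \<in> borel_measurable \<mu>" for n
        unfolding P_def by (intro mu) measurable
      have Pint: "(\<integral>\<^sup>+ z. ennreal (P n z) \<partial>\<mu>) \<le> ennreal (c n * B)" for n
      proof -
        have peq: "ennreal (P n z) = ennreal (c n) * ennreal (v n / (cmod (z - \<gamma> n))\<^sup>2)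
            + ennreal (16 * c n / v 0) * ennreal (v 0 / (cmod (z - \<gamma> 0))\<^sup>2)" for z
        proof -
          have eq: "P n z = c n * (v n / (cmod (z - \<gamma> n))\<^sup>2) + (16 * c n / v 0) * (v 0 / (cmod (z - \<gamma> 0))\<^sup>2)"
            unfolding P_def c_def using vpos[of 0] by (simp add: field_simps)
          have w0: "16 * c n / v 0 \<ge> 0" using c0[of n] vpos[of 0] by simp
          have "ennreal (P n z) = ennreal (c n * (v n / (cmod (z - \<gamma> n))\<^sup>2)) + ennreal ((16 * c n / v 0) * (v 0 / (cmod (z - \<gamma> 0))\<^sup>2))"
            unfolding eq using c0[of n] w0 vpos[of n] vpos[of 0] by (intro ennreal_plus) auto
          also have "\<dots> = ennreal (c n) * ennreal (v n / (cmod (z - \<gamma> n))\<^sup>2)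
            + ennreal (16 * c n / v 0) * ennreal (v 0 / (cmod (z - \<gamma> 0))\<^sup>2)"
            by (simp only: ennreal_mult'[OF c0] ennreal_mult'[OF w0])
          finally show ?thesis .
        qed
        have "(\<integral>\<^sup>+ z. ennreal (P n z) \<partial>\<mu>) = ennreal (c n) * (\<integral>\<^sup>+ z. ennreal (v n / (cmod (z - \<gamma> n))\<^sup>2) \<partial>\<mu>)
            + ennreal (16 * c n / v 0) * (\<integral>\<^sup>+ z. ennreal (v 0 / (cmod (z - \<gamma> 0))\<^sup>2) \<partial>\<mu>)"
          unfolding peq using umeas
          by (simp add: nn_integral_add nn_integral_cmult)
        also have "\<dots> \<le> ennreal (c n) * ennreal M + ennreal (16 * c n / v 0) * ennreal M"
          by (intro add_mono mult_left_mono intM) auto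
        also have "\<dots> = ennreal (c n * B)"
          unfolding B_def using c0[of n] vpos[of 0] M0
          by (simp add: ennreal_mult[symmetric] ennreal_plus[symmetric] algebra_simps del: ennreal_plus)
        finally show ?thesis .
      qed
      have "(\<integral>\<^sup>+ z. ennreal ((cmod (H_op \<gamma> v a z))\<^sup>2) \<partial>\<mu>) \<le> (\<integral>\<^sup>+ z. ennreal K * (\<Sum>n. ennreal (P n z)) \<partial>\<mu>)"
        by (rule nn_integral_mono_AE) (use AE pw in auto)
      also have "\<dots> = ennreal K * (\<Sum>n. \<integral>\<^sup>+ z. ennreal (P n z) \<partial>\<mu>)"
        using Pm by (simp add: nn_integral_cmult nn_integral_suminf)
      also have "\<dots> \<le> ennreal K * (\<Sum>n. ennreal (c n * B))"
        by (intro mult_left_mono suminf_le Pint) auto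
      also have "(\<Sum>n. ennreal (c n * B)) = ennreal (\<Sum>n. c n * B)"
        using c0 B0 sc by (intro suminf_ennreal2 summable_mult2) auto
      also have "(\<Sum>n. c n * B) = (\<Sum>n. c n) * B" using sc by (rule suminf_mult2[symmetric])
      also have "ennreal K * ennreal ((\<Sum>n. c n) * B) = ennreal (K * B * (\<Sum>n. c n))"
        using K0 by (simp add: ennreal_mult'[symmetric] mult_ac)
      finally show "(\<integral>\<^sup>+ z. ennreal ((cmod (H_op \<gamma> v a z))\<^sup>2) \<partial>\<mu>) \<le> ennreal (K * B * (\<Sum>n. (cmod (a n))\<^sup>2 * v n))"
        unfolding c_def .
    qed
  qed
qed

end
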